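(* Let $r\ge2$ and $\alpha,\delta>0$ with $\delta\le\alpha$, $\delta\le 1/(2r)$ and $\alpha<1/(4r(r+1))$. Let $Q$ be an $[r]$-coloured graph on a subset of $[n]$, let $\mathcal{C}$ be a nonempty family of $\delta$-balanced $r$-cuts of $[n]$ each compatible with $Q$, and let $\xi\le1$. Suppose that for every ordered $r$-tuple $S=(S_1,\dots,S_r)$ of pairwise disjoint subsets of $[n]$ that is compatible with $Q$ and satisfies $\min_i|S_i|\ge(1-4r\alpha)n/r$ we are given an event $F(S)$ about a graph $G$ on $[n]$ that is decreasing (closed under deleting edges) and determined by $G\cap\mathrm{ext}(S)$, and satisfies $\Pr(F(S)\mid Q\subseteq G_{n,p})\le\xi$. Let $\mathcal{R}$ be the event that $G_{n,p}$ is $\mathcal{C}$-rigid and its $\mathcal{C}$-core can be labelled $\{S_1,\dots,S_r\}$ with $V^i(Q)\subseteq S_i$ for all $i\in[r]$ such that $F(S_1,\dots,S_r)$ holds. Then $\Pr(\mathcal{R}\mid Q\subseteq G_{n,p})\le r!\cdot\xi$.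
   Context: An $[r]$-coloured graph has vertices coloured from $[r]$ (not necessarily properly); $V^k(Q)$ is the set of vertices of colour $k$. A tuple $(V_1,\dots,V_r)$ of pairwise disjoint sets is compatible with $Q$ if $V^k(Q)\subseteq V_k$ for all $k$. An $r$-cut is an ordered partition of $[n]$ into $r$ parts; it is $\delta$-balanced if each part has size $(1\pm\delta)n/r$; $\mathrm{ext}(S)$ is the set of pairs meeting two distinct $S_i$. $b_{\mathcal{C}}(G)=\max_{\Pi\in\mathcal{C}}|G\cap\mathrm{ext}(\Pi)|$, $\mathrm{maxcut}_{\mathcal{C}}(G)$ is the set of $\Pi\in\mathcal{C}$ attaining it; $x\equiv_{\mathcal{C},G}y$ if $x,y$ lie in the same part of every cut in $\mathrm{maxcut}_{\mathcal{C}}(G)$, and the classes are $(\mathcal{C},G)$-components. $G$ is $\mathcal{C}$-rigid if at least $(1-\alpha)n^2/(2r)$ unordered pairs of distinct vertices are equivalent. For a $\mathcal{C}$-rigid $G$ there are exactly $r$ components of size greater than $(1-4r\alpha)n/r$; this unordered collection is the $\mathcal{C}$-core of $G$. $Q\subseteq G_{n,p}$ means all edges of $Q$ are in $G_{n,p}$. *)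

theory Defs
  imports Main "HOL.Real"
begin

text \<open>Vertex set [n] = {1..n}; colours and part indices range over [r] = {1..r}.
  A graph on [n] is a set of 2-element subsets of [n].  Tuples / cuts are
  functions nat => nat set that are empty outside [r].\<close>

definition all_pairs :: "nat \<Rightarrow> nat set set" where
  "all_pairs n = {{x, y} | x y. x \<in> {1..n} \<and> y \<in> {1..n} \<and> x \<noteq> y}"

definition gnp_prob :: "nat \<Rightarrow> real \<Rightarrow> nat set set set \<Rightarrow> real" where
  "gnp_prob n p A = (\<Sum>G\<in>Pow (all_pairs n).
      if G \<in> A then p ^ card G * (1 - p) ^ (card (all_pairs n) - card G) else 0)"

definition gnp_cond :: "nat \<Rightarrow> real \<Rightarrow> nat set set set \<Rightarrow> nat set set set \<Rightarrow> real" where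
  "gnp_cond n p A B = gnp_prob n p (A \<inter> B) / gnp_prob n p B"

definition coloured_graph :: "nat \<Rightarrow> nat \<Rightarrow> nat set \<Rightarrow> (nat \<Rightarrow> nat) \<Rightarrow> nat set set \<Rightarrow> bool" where
  "coloured_graph n r VQ col EQ \<longleftrightarrow> VQ \<subseteq> {1..n} \<and> (\<forall>v\<in>VQ. col v \<in> {1..r}) \<and>
     EQ \<subseteq> {{x, y} | x y. x \<in> VQ \<and> y \<in> VQ \<and> x \<noteq> y}"

definition colour_class :: "nat set \<Rightarrow> (nat \<Rightarrow> nat) \<Rightarrow> nat \<Rightarrow> nat set" where
  "colour_class VQ col k = {v \<in> VQ. col v = k}"

definition is_tuple :: "nat \<Rightarrow> (nat \<Rightarrow> nat set) \<Rightarrow> bool" where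
  "is_tuple r S \<longleftrightarrow> (\<forall>i. i \<notin> {1..r} \<longrightarrow> S i = {})"

definition pw_disjoint :: "nat \<Rightarrow> (nat \<Rightarrow> nat set) \<Rightarrow> bool" where
  "pw_disjoint r S \<longleftrightarrow> (\<forall>i\<in>{1..r}. \<forall>j\<in>{1..r}. i \<noteq> j \<longrightarrow> S i \<inter> S j = {})"

definition compatible :: "nat \<Rightarrow> nat set \<Rightarrow> (nat \<Rightarrow> nat) \<Rightarrow> (nat \<Rightarrow> nat set) \<Rightarrow> bool" where
  "compatible r VQ col S \<longleftrightarrow> (\<forall>k\<in>{1..r}. colour_class VQ col k \<subseteq> S k)"

definition is_cut :: "nat \<Rightarrow> nat \<Rightarrow> (nat \<Rightarrow> nat set) \<Rightarrow> bool" where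
  "is_cut n r P \<longleftrightarrow> is_tuple r P \<and> pw_disjoint r P \<and> (\<Union>i\<in>{1..r}. P i) = {1..n}"

definition balanced_cut :: "nat \<Rightarrow> nat \<Rightarrow> real \<Rightarrow> (nat \<Rightarrow> nat set) \<Rightarrow> bool" where
  "balanced_cut n r \<delta> P \<longleftrightarrow> is_cut n r P \<and>
     (\<forall>i\<in>{1..r}. (1 - \<delta>) * real n / real r \<le> real (card (P i)) \<and>
                 real (card (P i)) \<le> (1 + \<delta>) * real n / real r)"

definition ext :: "nat \<Rightarrow> (nat \<Rightarrow> nat set) \<Rightarrow> nat set set" where
  "ext r S = {{x, y} | x y i j. i \<in> {1..r} \<and> j \<in> {1..r} \<and> i \<noteq> j \<and> x \<in> S i \<and> y \<in> S j}"

definition bval :: "nat \<Rightarrow> (nat \<Rightarrow> nat set) set \<Rightarrow> nat set set \<Rightarrow> nat" where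
  "bval r C G = Max ((\<lambda>P. card (G \<inter> ext r P)) ` C)"

definition maxcut :: "nat \<Rightarrow> (nat \<Rightarrow> nat set) set \<Rightarrow> nat set set \<Rightarrow> (nat \<Rightarrow> nat set) set" where
  "maxcut r C G = {P \<in> C. card (G \<inter> ext r P) = bval r C G}"

definition cequiv :: "nat \<Rightarrow> (nat \<Rightarrow> nat set) set \<Rightarrow> nat set set \<Rightarrow> nat \<Rightarrow> nat \<Rightarrow> bool" where
  "cequiv r C G x y \<longleftrightarrow> (\<forall>P\<in>maxcut r C G. \<forall>i\<in>{1..r}. x \<in> P i \<longleftrightarrow> y \<in> P i)"

definition components :: "nat \<Rightarrow> nat \<Rightarrow> (nat \<Rightarrow> nat set) set \<Rightarrow> nat set set \<Rightarrow> nat set set" where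
  "components n r C G = {{y \<in> {1..n}. cequiv r C G x y} | x. x \<in> {1..n}}"

definition rigid :: "nat \<Rightarrow> nat \<Rightarrow> real \<Rightarrow> (nat \<Rightarrow> nat set) set \<Rightarrow> nat set set \<Rightarrow> bool" where
  "rigid n r \<alpha> C G \<longleftrightarrow>
     real (card {{x, y} | x y. x \<in> {1..n} \<and> y \<in> {1..n} \<and> x \<noteq> y \<and> cequiv r C G x y})
       \<ge> (1 - \<alpha>) * real n ^ 2 / (2 * real r)"

definition core :: "nat \<Rightarrow> nat \<Rightarrow> real \<Rightarrow> (nat \<Rightarrow> nat set) set \<Rightarrow> nat set set \<Rightarrow> nat set set" where
  "core n r \<alpha> C G = {K \<in> components n r C G. real (card K) > (1 - 4 * real r * \<alpha>) * real n / real r}"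

end

theory Submission
  imports Defs "HOL-Combinatorics.Multiset_Permutations"
begin

definition hsum :: "('a \<Rightarrow> real) \<Rightarrow> ('a \<Rightarrow> real) \<Rightarrow> 'a set \<Rightarrow> ('a set \<Rightarrow> real) \<Rightarrow> real" where
  "hsum a b E h = (\<Sum>A\<in>Pow E. ((\<Prod>e\<in>A. a e) * (\<Prod>e\<in>E-A. b e)) * h A)"

lemma hsum_insert:
  assumes "finite E" "e \<notin> E"
  shows "hsum a b (insert e E) h = b e * hsum a b E h + a e * hsum a b E (\<lambda>A. h (insert e A))"
proof -
  have fin: "finite (Pow E)" using assms by simp
  have disj: "Pow E \<inter> insert e ` Pow E = {}" using assms by auto
  have inj: "inj_on (insert e) (Pow E)" using assms by (auto simp: inj_on_def)
  have s1: "(\<Sum>A\<in>Pow E. ((\<Prod>x\<in>A. a x) * (\<Prod>x\<in>insert e E-A. b x)) * h A)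
      = b e * hsum a b E h"
    unfolding hsum_def sum_distrib_left
  proof (rule sum.cong[OF refl])
    fix A assume "A \<in> Pow E"
    then have "insert e E - A = insert e (E - A)" "e \<notin> E - A" using assms by auto
    then show "((\<Prod>x\<in>A. a x) * (\<Prod>x\<in>insert e E-A. b x)) * h A = b e * (((\<Prod>x\<in>A. a x) * (\<Prod>x\<in>E-A. b x)) * h A)"
      using assms by (simp add: prod.insert)
  qed
  have s2: "(\<Sum>A\<in>insert e ` Pow E. ((\<Prod>x\<in>A. a x) * (\<Prod>x\<in>insert e E-A. b x)) * h A)
      = a e * hsum a b E (\<lambda>A. h (insert e A))"
    unfolding hsum_def sum_distrib_left sum.reindex[OF inj] o_def
  proof (rule sum.cong[OF refl])
    fix A assume A: "A \<in> Pow E"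
    then have "insert e E - insert e A = E - A" "e \<notin> A" "finite A" using assms by (auto intro: finite_subset)
    then show "((\<Prod>x\<in>insert e A. a x) * (\<Prod>x\<in>insert e E-insert e A. b x)) * h (insert e A) = a e * (((\<Prod>x\<in>A. a x) * (\<Prod>x\<in>E-A. b x)) * h (insert e A))"
      by (simp add: prod.insert)
  qed
  have "hsum a b (insert e E) h = (\<Sum>A\<in>Pow E. ((\<Prod>x\<in>A. a x) * (\<Prod>x\<in>insert e E-A. b x)) * h A)
     + (\<Sum>A\<in>insert e ` Pow E. ((\<Prod>x\<in>A. a x) * (\<Prod>x\<in>insert e E-A. b x)) * h A)"
    unfolding hsum_def Pow_insert by (rule sum.union_disjoint[OF fin finite_imageI[OF fin] disj])
  then show ?thesis using s1 s2 by simp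
qed

lemma hsum_mono:
  assumes "\<forall>e. 0 \<le> a e" "\<forall>e. 0 \<le> b e" "\<And>A. A \<subseteq> E \<Longrightarrow> h A \<le> h' A"
  shows "hsum a b E h \<le> hsum a b E h'"
  unfolding hsum_def
  by (rule sum_mono) (use assms in \<open>auto intro!: mult_left_mono prod_nonneg mult_nonneg_nonneg\<close>)

lemma hsum_cong:
  assumes "\<And>A. A \<subseteq> E \<Longrightarrow> h A = h' A"
  shows "hsum a b E h = hsum a b E h'"
  unfolding hsum_def using assms by (auto intro!: sum.cong)

lemma harris:
  "finite E \<Longrightarrow> \<forall>e. 0 \<le> a e \<Longrightarrow> \<forall>e. 0 \<le> b e \<Longrightarrow>
   \<forall>A e. A \<subseteq> E \<longrightarrow> e \<in> E \<longrightarrow> e \<notin> A \<longrightarrow> e \<notin> D \<longrightarrow> f (insert e A) = f A \<Longrightarrow>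
   \<forall>A e. A \<subseteq> E \<longrightarrow> e \<in> E \<longrightarrow> e \<notin> A \<longrightarrow> e \<in> D \<longrightarrow> f (insert e A) \<le> f A \<Longrightarrow>
   \<forall>A e. A \<subseteq> E \<longrightarrow> e \<in> E \<longrightarrow> e \<notin> A \<longrightarrow> e \<in> D \<longrightarrow> g A \<le> g (insert e A) \<Longrightarrow>
   hsum a b E (\<lambda>A. f A * g A) * hsum a b E (\<lambda>_. 1) \<le> hsum a b E f * hsum a b E g"
proof (induction E arbitrary: f g rule: finite_induct)
  case empty
  then show ?case by (simp add: hsum_def)
next
  case (insert e E)
  let ?S = "hsum a b E"
  define f1 where "f1 = (\<lambda>A. f (insert e A))"
  define g1 where "g1 = (\<lambda>A. g (insert e A))"
  have P3: "\<And>A ea. A \<subseteq> E \<Longrightarrow> ea \<in> E \<Longrightarrow> ea \<notin> A \<Longrightarrow>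
      insert e A \<subseteq> insert e E \<and> ea \<in> insert e E \<and> ea \<notin> insert e A \<and> A \<subseteq> insert e E \<and> insert ea (insert e A) = insert e (insert ea A)"
    using insert.hyps by auto
  have ih0: "?S (\<lambda>A. f A * g A) * ?S (\<lambda>_. 1) \<le> ?S f * ?S g"
  proof (rule insert.IH)
    show "\<forall>A ea. A \<subseteq> E \<longrightarrow> ea \<in> E \<longrightarrow> ea \<notin> A \<longrightarrow> ea \<notin> D \<longrightarrow> f (insert ea A) = f A"
      using insert.prems(3) P3 by simp
    show "\<forall>A ea. A \<subseteq> E \<longrightarrow> ea \<in> E \<longrightarrow> ea \<notin> A \<longrightarrow> ea \<in> D \<longrightarrow> f (insert ea A) \<le> f A"
      using insert.prems(4) P3 by simp
    show "\<forall>A ea. A \<subseteq> E \<longrightarrow> ea \<in> E \<longrightarrow> ea \<notin> A \<longrightarrow> ea \<in> D \<longrightarrow> g A \<le> g (insert ea A)"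
      using insert.prems(5) P3 by simp
  qed (use insert.prems in simp_all)
  have ih1: "?S (\<lambda>A. f1 A * g1 A) * ?S (\<lambda>_. 1) \<le> ?S f1 * ?S g1"
    unfolding f1_def g1_def
  proof (rule insert.IH)
    show "\<forall>A ea. A \<subseteq> E \<longrightarrow> ea \<in> E \<longrightarrow> ea \<notin> A \<longrightarrow> ea \<notin> D \<longrightarrow> f (insert e (insert ea A)) = f (insert e A)"
      using insert.prems(3) P3 by (metis (no_types, lifting))
    show "\<forall>A ea. A \<subseteq> E \<longrightarrow> ea \<in> E \<longrightarrow> ea \<notin> A \<longrightarrow> ea \<in> D \<longrightarrow> f (insert e (insert ea A)) \<le> f (insert e A)"
      using insert.prems(4) P3 by (metis (no_types, lifting))
    show "\<forall>A ea. A \<subseteq> E \<longrightarrow> ea \<in> E \<longrightarrow> ea \<notin> A \<longrightarrow> ea \<in> D \<longrightarrow> g (insert e A) \<le> g (insert e (insert ea A))"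
      using insert.prems(5) P3 by (metis (no_types, lifting))
  qed (use insert.prems in simp_all)
  have Zn: "0 \<le> ?S (\<lambda>_. 1)" unfolding hsum_def using insert.prems
    by (auto intro!: sum_nonneg prod_nonneg mult_nonneg_nonneg)
  have key: "(?S f1 - ?S f) * (?S g1 - ?S g) \<le> 0"
  proof (cases "e \<in> D")
    case True
    have "?S f1 \<le> ?S f" unfolding f1_def
    proof (rule hsum_mono)
      fix A assume "A \<subseteq> E"
      then have "A \<subseteq> insert e E" "e \<notin> A" using insert.hyps by auto
      then show "f (insert e A) \<le> f A" using insert.prems(4) True by blast
    qed (use insert.prems in auto)
    moreover have "?S g \<le> ?S g1" unfolding g1_def
    proof (rule hsum_mono)
      fix A assume "A \<subseteq> E"
      then have "A \<subseteq> insert e E" "e \<notin> A" using insert.hyps by auto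
      then show "g A \<le> g (insert e A)" using insert.prems(5) True by blast
    qed (use insert.prems in auto)
    ultimately show ?thesis by (simp add: mult_nonpos_nonneg)
  next
    case False
    have "?S f1 = ?S f" unfolding f1_def
    proof (rule hsum_cong)
      fix A assume "A \<subseteq> E"
      then have "A \<subseteq> insert e E" "e \<notin> A" using insert.hyps by auto
      then show "f (insert e A) = f A" using insert.prems(3) False by blast
    qed
    then show ?thesis by simp
  qed
  have ae: "0 \<le> a e" "0 \<le> b e" using insert.prems by auto
  have L: "hsum a b (insert e E) (\<lambda>A. f A * g A) = b e * ?S (\<lambda>A. f A * g A) + a e * ?S (\<lambda>A. f1 A * g1 A)"
    using hsum_insert[OF insert.hyps] unfolding f1_def g1_def by simp
  have Z: "hsum a b (insert e E) (\<lambda>_. 1) = (b e + a e) * ?S (\<lambda>_. 1)"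
    using hsum_insert[OF insert.hyps, of a b "\<lambda>_. 1"] by (simp add: algebra_simps)
  have F: "hsum a b (insert e E) f = b e * ?S f + a e * ?S f1"
    using hsum_insert[OF insert.hyps] unfolding f1_def by simp
  have G: "hsum a b (insert e E) g = b e * ?S g + a e * ?S g1"
    using hsum_insert[OF insert.hyps] unfolding g1_def by simp
  define X0 where "X0 = ?S (\<lambda>A. f A * g A)"
  define X1 where "X1 = ?S (\<lambda>A. f1 A * g1 A)"
  define Zs where "Zs = ?S (\<lambda>_. 1)"
  define F0 where "F0 = ?S f"
  define F1 where "F1 = ?S f1"
  define G0 where "G0 = ?S g"
  define G1 where "G1 = ?S g1"
  have "(b e * X0 + a e * X1) * ((b e + a e) * Zs) = (b e + a e) * (b e * (X0 * Zs) + a e * (X1 * Zs))"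
    by (simp add: algebra_simps)
  also have "\<dots> \<le> (b e + a e) * (b e * (F0 * G0) + a e * (F1 * G1))"
    using ih0 ih1 ae unfolding X0_def X1_def Zs_def F0_def F1_def G0_def G1_def
    by (intro mult_left_mono add_mono) auto
  also have "\<dots> = (b e * F0 + a e * F1) * (b e * G0 + a e * G1) + a e * b e * ((F1 - F0) * (G1 - G0))"
    by (simp add: algebra_simps)
  also have "\<dots> \<le> (b e * F0 + a e * F1) * (b e * G0 + a e * G1)"
    using key ae unfolding F0_def F1_def G0_def G1_def
    by (simp add: mult_nonneg_nonpos)
  finally show ?case unfolding L Z F G X0_def X1_def Zs_def F0_def F1_def G0_def G1_def .
qed


lemma finite_all_pairs: "finite (all_pairs n)"
proof -
  have "all_pairs n \<subseteq> Pow {1..n}" unfolding all_pairs_def by auto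
  then show ?thesis by (rule finite_subset) simp
qed

lemma finite_tuples: "finite {S::nat\<Rightarrow>nat set. is_tuple r S \<and> (\<forall>i\<in>{1..r}. S i \<subseteq> {1..n})}"
proof (rule finite_subset)
  show "{S::nat\<Rightarrow>nat set. is_tuple r S \<and> (\<forall>i\<in>{1..r}. S i \<subseteq> {1..n})}
     \<subseteq> {f. \<forall>x. (x \<in> {1..r} \<longrightarrow> f x \<in> Pow {1..n}) \<and> (x \<notin> {1..r} \<longrightarrow> f x = {})}"
    unfolding is_tuple_def by auto
  show "finite {f::nat\<Rightarrow>nat set. \<forall>x. (x \<in> {1..r} \<longrightarrow> f x \<in> Pow {1..n}) \<and> (x \<notin> {1..r} \<longrightarrow> f x = {})}"
    by (rule finite_set_of_finite_funs) auto
qed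

lemma comp_sub: "K \<in> components n r C G \<Longrightarrow> K \<subseteq> {1..n}"
  unfolding components_def by auto

lemma cequiv_sym: "cequiv r C G x y \<Longrightarrow> cequiv r C G y x"
  unfolding cequiv_def by simp

lemma cequiv_trans: "cequiv r C G x y \<Longrightarrow> cequiv r C G y z \<Longrightarrow> cequiv r C G x z"
  unfolding cequiv_def by simp

lemma comp_eq:
  assumes "K1 \<in> components n r C G" "K2 \<in> components n r C G" "z \<in> K1" "z \<in> K2"
  shows "K1 = K2"
proof -
  obtain x1 where x1: "K1 = {y \<in> {1..n}. cequiv r C G x1 y}" using assms(1) unfolding components_def by auto
  obtain x2 where x2: "K2 = {y \<in> {1..n}. cequiv r C G x2 y}" using assms(2) unfolding components_def by auto
  have a: "cequiv r C G x1 z" "cequiv r C G x2 z" using assms x1 x2 by auto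
  have "cequiv r C G x1 y = cequiv r C G x2 y" for y
    using a cequiv_sym cequiv_trans by metis
  then show ?thesis using x1 x2 by simp
qed

lemma comp_in_part:
  assumes "K \<in> components n r C G" "P \<in> maxcut r C G" "i \<in> {1..r}" "x \<in> K" "x \<in> P i" "y \<in> K"
  shows "y \<in> P i"
proof -
  obtain x0 where x0: "K = {y \<in> {1..n}. cequiv r C G x0 y}" using assms(1) unfolding components_def by auto
  have "cequiv r C G x0 x" "cequiv r C G x0 y" using assms x0 by auto
  then have "cequiv r C G x y" using cequiv_sym cequiv_trans by metis
  then show ?thesis using assms(2,3,5) unfolding cequiv_def by simp
qed

lemma card_insert_int: "finite G \<Longrightarrow> card (insert e G \<inter> X) = card (G \<inter> X) + (if e \<in> X \<and> e \<notin> G then 1 else 0)"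
  by (cases "e \<in> X") (auto simp: insert_absorb)

lemma maxcut_insert:
  assumes "finite C" "C \<noteq> {}" "finite G" "e \<notin> G" "\<forall>P\<in>maxcut r C G. e \<in> ext r P"
  shows "maxcut r C (insert e G) = maxcut r C G"
proof -
  define v where "v P = card (G \<inter> ext r P)" for P
  define v' where "v' P = card (insert e G \<inter> ext r P)" for P
  have vv: "v' P = v P + (if e \<in> ext r P then 1 else 0)" for P
    unfolding v_def v'_def using card_insert_int[OF assms(3)] assms(4) by simp
  define b where "b = Max (v ` C)"
  have bv: "bval r C G = b" unfolding b_def bval_def v_def by simp
  have le: "P \<in> C \<Longrightarrow> v P \<le> b" for P unfolding b_def using assms(1) by auto
  have "b \<in> v ` C" unfolding b_def using Max_in[of "v ` C"] assms(1,2) by auto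
  then obtain P0 where P0: "P0 \<in> C" "v P0 = b" by auto
  have M: "maxcut r C G = {P \<in> C. v P = b}" unfolding maxcut_def bv v_def by simp
  have P0e: "e \<in> ext r P0" using assms(5) P0 M by auto
  have b': "bval r C (insert e G) = b + 1"
    unfolding bval_def v'_def[symmetric]
  proof (rule Max_eqI)
    show "finite (v' ` C)" using assms(1) by simp
    show "y \<le> b + 1" if yC: "y \<in> v' ` C" for y
    proof -
      obtain P where "P \<in> C" "y = v' P" using yC by blast
      then show ?thesis using le[of P] vv[of P] by simp
    qed
    have "v' P0 = b + 1" using P0 P0e vv[of P0] by simp
    then show "b + 1 \<in> v' ` C" using P0(1) by (metis image_eqI)
  qed
  have "maxcut r C (insert e G) = {P \<in> C. v' P = b + 1}" unfolding maxcut_def b' v'_def by simp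
  also have "\<dots> = {P \<in> C. v P = b}"
  proof (intro Collect_cong conj_cong refl)
    fix P assume "P \<in> C"
    have "v P = b \<Longrightarrow> e \<in> ext r P" using assms(5) M \<open>P \<in> C\<close> by blast
    then show "(v' P = b + 1) = (v P = b)" using le[OF \<open>P \<in> C\<close>] vv[of P] by (cases "e \<in> ext r P") auto
  qed
  finally show ?thesis using M by simp
qed


lemma finite_C:
  assumes "\<forall>P\<in>C. balanced_cut n r \<delta> P"
  shows "finite C"
proof (rule finite_subset)
  show "C \<subseteq> {f. \<forall>x. (x \<in> {1..r} \<longrightarrow> f x \<in> Pow {1..n}) \<and> (x \<notin> {1..r} \<longrightarrow> f x = {})}"
  proof
    fix P assume "P \<in> C"
    then have "is_cut n r P" using assms balanced_cut_def by blast
    then show "P \<in> {f. \<forall>x. (x \<in> {1..r} \<longrightarrow> f x \<in> Pow {1..n}) \<and> (x \<notin> {1..r} \<longrightarrow> f x = {})}"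
      unfolding is_cut_def is_tuple_def by blast
  qed
  show "finite {f::nat\<Rightarrow>nat set. \<forall>x. (x \<in> {1..r} \<longrightarrow> f x \<in> Pow {1..n}) \<and> (x \<notin> {1..r} \<longrightarrow> f x = {})}"
    by (rule finite_set_of_finite_funs) auto
qed

lemma size_ineq:
  fixes r :: nat and \<alpha> \<delta> :: real
  assumes "r \<ge> 2" "\<alpha> > 0" "\<delta> \<le> 1 / (2 * real r)" "\<alpha> < 1 / (4 * real r * (real r + 1))"
  shows "(1 + \<delta>) * real n / real r \<le> 2 * ((1 - 4 * real r * \<alpha>) * real n / real r)"
proof -
  have r2: "real r \<ge> 2" using assms(1) by simp
  have "\<alpha> * (4 * real r * (real r + 1)) < 1" using assms(4) r2
    by (simp add: less_divide_eq mult.commute)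
  moreover have "\<alpha> * (4 * real r * 3) \<le> \<alpha> * (4 * real r * (real r + 1))"
    using assms(2) r2 by (intro mult_left_mono) auto
  ultimately have a: "12 * real r * \<alpha> \<le> 1" by (simp add: algebra_simps)
  have "\<delta> * (2 * real r) \<le> 1" using assms(3) r2 by (simp add: le_divide_eq mult.commute)
  then have d: "\<delta> \<le> 1/4"
  proof (cases "\<delta> \<le> 0")
    case False
    then have "\<delta> * 4 \<le> \<delta> * (2 * real r)" using r2 by (intro mult_left_mono) auto
    with \<open>\<delta> * (2 * real r) \<le> 1\<close> show ?thesis by simp
  qed simp
  have "(1 + \<delta>) \<le> 2 * (1 - 4 * real r * \<alpha>)" using a d by (simp add: algebra_simps)
  then have "(1 + \<delta>) * real n \<le> 2 * (1 - 4 * real r * \<alpha>) * real n" by (intro mult_right_mono) auto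
  then have "(1 + \<delta>) * real n / real r \<le> (2 * (1 - 4 * real r * \<alpha>) * real n) / real r"
    by (rule divide_right_mono) simp
  then show ?thesis by (simp only: times_divide_eq_right mult.assoc)
qed

lemma core_insert:
  fixes r :: nat and \<alpha> \<delta> :: real
  assumes "r \<ge> 2" "\<alpha> > 0" "\<delta> \<le> 1 / (2 * real r)" "\<alpha> < 1 / (4 * real r * (real r + 1))"
    and C: "finite C" "C \<noteq> {}" "\<forall>P\<in>C. balanced_cut n r \<delta> P"
    and G: "finite G" "e \<notin> G"
    and S: "inj_on S {1..r}" "S ` {1..r} = core n r \<alpha> C G" and e: "e \<in> ext r S"
  shows "maxcut r C (insert e G) = maxcut r C G"
proof (rule maxcut_insert[OF C(1,2) G])
  show "\<forall>P\<in>maxcut r C G. e \<in> ext r P"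
  proof
    fix P assume PM: "P \<in> maxcut r C G"
    then have PC: "P \<in> C" unfolding maxcut_def by simp
    then have bc: "balanced_cut n r \<delta> P" using C by blast
    then have cut: "is_cut n r P" unfolding balanced_cut_def by simp
    obtain x y i j where e': "e = {x, y}" "i \<in> {1..r}" "j \<in> {1..r}" "i \<noteq> j" "x \<in> S i" "y \<in> S j"
      using e unfolding ext_def by blast
    have Sij: "S i \<noteq> S j" using S(1) e' unfolding inj_on_def by blast
    have Si: "S i \<in> core n r \<alpha> C G" "S j \<in> core n r \<alpha> C G" using S(2) e' by auto
    then have Sic: "S i \<in> components n r C G" "S j \<in> components n r C G" unfolding core_def by auto
    have cards: "real (card (S i)) > (1 - 4 * real r * \<alpha>) * real n / real r"
      "real (card (S j)) > (1 - 4 * real r * \<alpha>) * real n / real r" using Si unfolding core_def by auto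
    have "x \<in> {1..n}" "y \<in> {1..n}" using comp_sub[OF Sic(1)] comp_sub[OF Sic(2)] e' by auto
    then obtain a b where ab: "a \<in> {1..r}" "x \<in> P a" "b \<in> {1..r}" "y \<in> P b"
      using cut unfolding is_cut_def by blast
    have subA: "S i \<subseteq> P a" using comp_in_part[OF Sic(1) PM ab(1) e'(5) ab(2)] by blast
    have subB: "S j \<subseteq> P b" using comp_in_part[OF Sic(2) PM ab(3) e'(6) ab(4)] by blast
    have "a \<noteq> b"
    proof
      assume "a = b"
      have disj: "S i \<inter> S j = {}" using comp_eq[OF Sic] Sij by blast
      have "P a \<subseteq> (\<Union>i\<in>{1..r}. P i)" using ab(1) by blast
      then have "P a \<subseteq> {1..n}" using cut unfolding is_cut_def by simp
      then have Pfin: "finite (P a)" by (rule finite_subset) simp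
      have "S i \<union> S j \<subseteq> P a" using subA subB \<open>a = b\<close> by simp
      then have "card (S i \<union> S j) \<le> card (P a)" using Pfin by (rule card_mono[rotated])
      moreover have "card (S i \<union> S j) = card (S i) + card (S j)"
        using disj Pfin subA subB \<open>a = b\<close> by (intro card_Un_disjoint) (auto intro: finite_subset)
      ultimately have "real (card (S i)) + real (card (S j)) \<le> real (card (P a))" by simp
      moreover have "real (card (P a)) \<le> (1 + \<delta>) * real n / real r" using bc ab(1) unfolding balanced_cut_def by blast
      moreover note size_ineq[OF assms(1-4), of n]
      ultimately show False using cards by linarith
    qed
    then show "e \<in> ext r P" unfolding ext_def using e'(1) ab by blast
  qed
qed

lemma count_labellings:
  assumes "\<forall>S\<in>A. is_tuple r S \<and> inj_on S {1..r} \<and> S ` {1..r} = T"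
  shows "card A \<le> fact r"
proof (cases "A = {}")
  case True then show ?thesis by simp
next
  case False
  then obtain S0 where "S0 \<in> A" by blast
  then have T: "finite T" "card T = r" using assms by (auto simp: card_image)
  define L where "L S = map S [1..<Suc r]" for S :: "nat \<Rightarrow> nat set"
  have "inj_on L A"
  proof (rule inj_onI)
    fix S S' assume SA: "S \<in> A" "S' \<in> A" and "L S = L S'"
    then have "\<forall>i\<in>{1..r}. S i = S' i" unfolding L_def map_eq_conv by auto
    moreover have "is_tuple r S" "is_tuple r S'" using assms SA by auto
    ultimately show "S = S'" unfolding is_tuple_def by (intro HOL.ext) (case_tac "x \<in> {1..r}", auto)
  qed
  moreover have "L ` A \<subseteq> permutations_of_set T"
  proof
    fix xs assume "xs \<in> L ` A"
    then obtain S where S: "S \<in> A" "xs = L S" by blast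
    have "set xs = S ` {1..r}" unfolding S L_def by (auto simp: atLeastLessThanSuc_atLeastAtMost)
    moreover have "distinct xs"
    proof -
      have "inj_on S {1..r}" using assms S by auto
      then have "inj_on S (set [1..<Suc r])" by (simp del: upt_Suc add: atLeastLessThanSuc_atLeastAtMost)
      then show "distinct xs" unfolding S L_def by (simp del: upt_Suc add: distinct_map)
    qed
    ultimately show "xs \<in> permutations_of_set T" using assms S unfolding permutations_of_set_def by auto
  qed
  moreover have "finite (permutations_of_set T)" using T(1) by simp
  ultimately have "card A \<le> card (permutations_of_set T)" by (rule card_inj_on_le)
  then show ?thesis using T by simp
qed

lemma gnp_hsum:
  assumes "EQ \<subseteq> all_pairs n"
  shows "gnp_prob n p (A \<inter> {G. EQ \<subseteq> G}) =
    hsum (\<lambda>_. p) (\<lambda>e. if e \<in> EQ then 0 else 1 - p) (all_pairs n) (\<lambda>G. if G \<in> A then 1 else 0)"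
  unfolding gnp_prob_def hsum_def
proof (rule sum.cong[OF refl])
  fix G assume G: "G \<in> Pow (all_pairs n)"
  have fin: "finite (all_pairs n)" by (rule finite_all_pairs)
  have fG: "finite G" using G fin by (auto intro: finite_subset)
  have pa: "(\<Prod>e\<in>G. p) = p ^ card G" by simp
  show "(if G \<in> A \<inter> {G. EQ \<subseteq> G} then p ^ card G * (1 - p) ^ (card (all_pairs n) - card G) else 0) =
       (\<Prod>e\<in>G. p) * (\<Prod>e\<in>all_pairs n - G. if e \<in> EQ then 0 else 1 - p) * (if G \<in> A then 1 else 0)"
  proof (cases "EQ \<subseteq> G")
    case True
    have "(\<Prod>e\<in>all_pairs n - G. if e \<in> EQ then 0 else 1 - p) = (\<Prod>e\<in>all_pairs n - G. 1 - p)"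
      using True by (intro prod.cong) auto
    also have "\<dots> = (1 - p) ^ (card (all_pairs n) - card G)"
      using G fG by (simp add: card_Diff_subset)
    finally show ?thesis using True pa by simp
  next
    case False
    then obtain e where "e \<in> EQ" "e \<notin> G" by blast
    then have "(\<Prod>e\<in>all_pairs n - G. if e \<in> EQ then 0 else 1 - p) = 0"
      using assms fin by (intro prod_zero) auto
    then show ?thesis using False by simp
  qed
qed

lemma hsum_sum:
  "hsum a b E (\<lambda>A. \<Sum>i\<in>I. h i A) = (\<Sum>i\<in>I. hsum a b E (h i))"
  unfolding hsum_def sum_distrib_left by (rule sum.swap)

lemma hsum_cmult: "hsum a b E (\<lambda>A. c * h A) = c * hsum a b E h"
  unfolding hsum_def sum_distrib_left by (simp add: algebra_simps)

theorem mainTheorem17: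
  fixes n r :: nat and \<alpha> \<delta> \<xi> p :: real
    and VQ :: "nat set" and col :: "nat \<Rightarrow> nat" and EQ :: "nat set set"
    and C :: "(nat \<Rightarrow> nat set) set"
    and F :: "(nat \<Rightarrow> nat set) \<Rightarrow> nat set set set"
  assumes "r \<ge> 2" and "\<alpha> > 0" and "\<delta> > 0" and "\<delta> \<le> \<alpha>"
    and "\<delta> \<le> 1 / (2 * real r)" and "\<alpha> < 1 / (4 * real r * (real r + 1))"
    and "0 \<le> p" and "p \<le> 1"
    and "coloured_graph n r VQ col EQ"
    and "C \<noteq> {}"
    and "\<forall>P\<in>C. balanced_cut n r \<delta> P \<and> compatible r VQ col P"
    and "\<xi> \<le> 1"
    and "\<forall>S. is_tuple r S \<and> pw_disjoint r S \<and> (\<forall>i\<in>{1..r}. S i \<subseteq> {1..n}) \<and>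
             compatible r VQ col S \<and>
             (\<forall>i\<in>{1..r}. real (card (S i)) \<ge> (1 - 4 * real r * \<alpha>) * real n / real r) \<longrightarrow>
           (\<forall>G H. G \<subseteq> all_pairs n \<longrightarrow> H \<subseteq> G \<longrightarrow> G \<in> F S \<longrightarrow> H \<in> F S) \<and>
           (\<forall>G H. G \<subseteq> all_pairs n \<longrightarrow> H \<subseteq> all_pairs n \<longrightarrow>
               G \<inter> ext r S = H \<inter> ext r S \<longrightarrow> (G \<in> F S \<longleftrightarrow> H \<in> F S)) \<and>
           gnp_cond n p (F S) {G. EQ \<subseteq> G} \<le> \<xi>"
  shows "gnp_cond n p
           {G. rigid n r \<alpha> C G \<and>
               (\<exists>S. is_tuple r S \<and> inj_on S {1..r} \<and> S ` {1..r} = core n r \<alpha> C G \<and>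
                    compatible r VQ col S \<and> G \<in> F S)}
           {G. EQ \<subseteq> G}
         \<le> fact r * \<xi>"
proof -
  let ?E = "all_pairs n"
  let ?B = "{G. EQ \<subseteq> G}"
  define a :: "nat set \<Rightarrow> real" where "a = (\<lambda>_. p)"
  define b :: "nat set \<Rightarrow> real" where "b = (\<lambda>e. if e \<in> EQ then 0 else 1 - p)"
  define Ex where "Ex = hsum a b ?E"
  define ind :: "nat set set set \<Rightarrow> nat set set \<Rightarrow> real" where "ind = (\<lambda>A G. if G \<in> A then 1 else 0)"
  have finE: "finite ?E" by (rule finite_all_pairs)
  have EQsub: "EQ \<subseteq> all_pairs n"
  proof
    fix e assume "e \<in> EQ"
    then obtain x y where "e = {x, y}" "x \<in> VQ" "y \<in> VQ" "x \<noteq> y"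
      using assms(9) unfolding coloured_graph_def by blast
    moreover have "VQ \<subseteq> {1..n}" using assms(9) unfolding coloured_graph_def by blast
    ultimately show "e \<in> all_pairs n" unfolding all_pairs_def by blast
  qed
  have gp: "gnp_prob n p (A \<inter> ?B) = Ex (ind A)" for A
    unfolding Ex_def a_def b_def ind_def using gnp_hsum[OF EQsub] by simp
  have Bprob: "gnp_prob n p ?B = Ex (\<lambda>_. 1)" using gp[of UNIV] by (simp add: ind_def)
  have anonneg: "\<forall>e. 0 \<le> a e" "\<forall>e. 0 \<le> b e" unfolding a_def b_def using assms(7,8) by auto
  have Exmono: "Ex h \<le> Ex h'" if "\<And>G. G \<subseteq> ?E \<Longrightarrow> h G \<le> h' G" for h h'
    unfolding Ex_def using hsum_mono[OF anonneg that] .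
  have Ex0: "Ex (\<lambda>_. 0) = 0" unfolding Ex_def hsum_def by simp
  have Exnn: "0 \<le> Ex h" if "\<And>G. G \<subseteq> ?E \<Longrightarrow> 0 \<le> h G" for h
    using Exmono[of "\<lambda>_. 0" h] that Ex0 by simp
  have ind_nn: "0 \<le> ind A G" for A G unfolding ind_def by simp
  have Z0: "0 \<le> Ex (\<lambda>_. 1)" by (rule Exnn) simp
  have gnp_nn: "0 \<le> gnp_prob n p A" for A
    unfolding gnp_prob_def using assms(7,8) by (intro sum_nonneg) auto
  have finC: "finite C" using finite_C assms(11) by blast
  have xi0: "0 \<le> \<xi>"
  proof -
    obtain P0 where P0: "P0 \<in> C" using assms(10) by blast
    then have bc: "balanced_cut n r \<delta> P0" "compatible r VQ col P0" using assms(11) by auto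
    then have cut: "is_cut n r P0" unfolding balanced_cut_def by simp
    have sub: "\<forall>i\<in>{1..r}. P0 i \<subseteq> {1..n}" using cut unfolding is_cut_def by blast
    have "(1 - 4 * real r * \<alpha>) \<le> (1 - \<delta>)"
    proof -
      have "\<alpha> \<le> 4 * real r * \<alpha>" using assms(1,2) by simp
      then show ?thesis using assms(4) by linarith
    qed
    then have "(1 - 4 * real r * \<alpha>) * real n / real r \<le> (1 - \<delta>) * real n / real r"
      by (intro divide_right_mono mult_right_mono) auto
    then have cards: "\<forall>i\<in>{1..r}. real (card (P0 i)) \<ge> (1 - 4 * real r * \<alpha>) * real n / real r"
      using bc(1) unfolding balanced_cut_def by fastforce
    have "is_tuple r P0 \<and> pw_disjoint r P0 \<and> (\<forall>i\<in>{1..r}. P0 i \<subseteq> {1..n}) \<and>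
             compatible r VQ col P0 \<and>
             (\<forall>i\<in>{1..r}. real (card (P0 i)) \<ge> (1 - 4 * real r * \<alpha>) * real n / real r)"
      using cut sub bc(2) cards unfolding is_cut_def by simp
    with spec[OF assms(13), of P0] have "gnp_cond n p (F P0) {G. EQ \<subseteq> G} \<le> \<xi>" by simp
    moreover have "0 \<le> gnp_cond n p (F P0) {G. EQ \<subseteq> G}" unfolding gnp_cond_def
      using gnp_nn by simp
    ultimately show ?thesis by simp
  qed
  define R where "R = {G. rigid n r \<alpha> C G \<and>
               (\<exists>S. is_tuple r S \<and> inj_on S {1..r} \<and> S ` {1..r} = core n r \<alpha> C G \<and>
                    compatible r VQ col S \<and> G \<in> F S)}"
  have goal_eq: "gnp_cond n p R ?B = Ex (ind R) / Ex (\<lambda>_. 1)"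
    unfolding gnp_cond_def gp Bprob ..
  show ?thesis
  proof (cases "Ex (\<lambda>_. 1) = 0")
    case True
    then show ?thesis unfolding R_def[symmetric] goal_eq using xi0 by simp
  next
    case False
    then have Zpos: "0 < Ex (\<lambda>_. 1)" using Z0 by simp
    define SS where "SS = {S. (is_tuple r S \<and> pw_disjoint r S \<and> (\<forall>i\<in>{1..r}. S i \<subseteq> {1..n}) \<and>
             compatible r VQ col S \<and>
             (\<forall>i\<in>{1..r}. real (card (S i)) \<ge> (1 - 4 * real r * \<alpha>) * real n / real r)) \<and> inj_on S {1..r}}"
    have finSS: "finite SS"
      by (rule finite_subset[OF _ finite_tuples[of r n]]) (auto simp: SS_def)
    define U where "U S = {G. rigid n r \<alpha> C G \<and> core n r \<alpha> C G = S ` {1..r}}" for S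
    have mc_same: "rigid n r \<alpha> C G = rigid n r \<alpha> C G' \<and> core n r \<alpha> C G = core n r \<alpha> C G'"
      if "maxcut r C G = maxcut r C G'" for G G'
      unfolding rigid_def core_def components_def cequiv_def using that by simp
    have key: "Ex (ind (F S \<inter> U S)) \<le> \<xi> * Ex (ind (U S))" if SSS: "S \<in> SS" for S
    proof -
      have pre: "is_tuple r S \<and> pw_disjoint r S \<and> (\<forall>i\<in>{1..r}. S i \<subseteq> {1..n}) \<and>
             compatible r VQ col S \<and>
             (\<forall>i\<in>{1..r}. real (card (S i)) \<ge> (1 - 4 * real r * \<alpha>) * real n / real r)"
        and inj: "inj_on S {1..r}" using SSS unfolding SS_def by auto
      have hS: "(\<forall>G H. G \<subseteq> all_pairs n \<longrightarrow> H \<subseteq> G \<longrightarrow> G \<in> F S \<longrightarrow> H \<in> F S) \<and>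
           (\<forall>G H. G \<subseteq> all_pairs n \<longrightarrow> H \<subseteq> all_pairs n \<longrightarrow>
               G \<inter> ext r S = H \<inter> ext r S \<longrightarrow> (G \<in> F S \<longleftrightarrow> H \<in> F S)) \<and>
           gnp_cond n p (F S) {G. EQ \<subseteq> G} \<le> \<xi>"
        using mp[OF spec[OF assms(13), of S] pre] .
      have dec: "\<And>G H. G \<subseteq> all_pairs n \<Longrightarrow> H \<subseteq> G \<Longrightarrow> G \<in> F S \<Longrightarrow> H \<in> F S"
        using hS by blast
      have det: "\<And>G H. G \<subseteq> all_pairs n \<Longrightarrow> H \<subseteq> all_pairs n \<Longrightarrow>
               G \<inter> ext r S = H \<inter> ext r S \<Longrightarrow> G \<in> F S \<Longrightarrow> H \<in> F S"
        using hS by blast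
      have cond: "gnp_cond n p (F S) ?B \<le> \<xi>" using hS by blast
      have H: "Ex (\<lambda>A. ind (F S) A * ind (U S) A) * Ex (\<lambda>_. 1) \<le> Ex (ind (F S)) * Ex (ind (U S))"
        unfolding Ex_def
      proof (rule harris[OF finE anonneg, where D = "ext r S"])
        show "\<forall>A e. A \<subseteq> ?E \<longrightarrow> e \<in> ?E \<longrightarrow> e \<notin> A \<longrightarrow> e \<notin> ext r S \<longrightarrow> ind (F S) (insert e A) = ind (F S) A"
        proof (intro allI impI)
          fix A e assume A: "A \<subseteq> ?E" "e \<in> ?E" "e \<notin> A" "e \<notin> ext r S"
          then have i: "insert e A \<subseteq> ?E" "insert e A \<inter> ext r S = A \<inter> ext r S" by auto
          have "insert e A \<in> F S \<Longrightarrow> A \<in> F S" using det[OF i(1) A(1) i(2)] .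
          moreover have "A \<in> F S \<Longrightarrow> insert e A \<in> F S" using det[OF A(1) i(1) i(2)[symmetric]] .
          ultimately show "ind (F S) (insert e A) = ind (F S) A" unfolding ind_def by auto
        qed
        show "\<forall>A e. A \<subseteq> ?E \<longrightarrow> e \<in> ?E \<longrightarrow> e \<notin> A \<longrightarrow> e \<in> ext r S \<longrightarrow> ind (F S) (insert e A) \<le> ind (F S) A"
        proof (intro allI impI)
          fix A e assume A: "A \<subseteq> ?E" "e \<in> ?E" "e \<notin> A" "e \<in> ext r S"
          then have i: "insert e A \<subseteq> ?E" by auto
          have "insert e A \<in> F S \<Longrightarrow> A \<in> F S" using dec[OF i] by blast
          then show "ind (F S) (insert e A) \<le> ind (F S) A" unfolding ind_def by auto
        qed
        show "\<forall>A e. A \<subseteq> ?E \<longrightarrow> e \<in> ?E \<longrightarrow> e \<notin> A \<longrightarrow> e \<in> ext r S \<longrightarrow> ind (U S) A \<le> ind (U S) (insert e A)"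
        proof (intro allI impI)
          fix A e assume A: "A \<subseteq> ?E" "e \<in> ?E" "e \<notin> A" "e \<in> ext r S"
          have "insert e A \<in> U S" if AU: "A \<in> U S"
          proof -
            have fA: "finite A" using A(1) finE by (rule finite_subset)
            have core: "S ` {1..r} = core n r \<alpha> C A" using AU unfolding U_def by simp
            have "maxcut r C (insert e A) = maxcut r C A"
              by (rule core_insert[OF assms(1,2,5,6) finC assms(10) _ fA A(3) inj core A(4)])
                 (use assms(11) in blast)
            then have "rigid n r \<alpha> C (insert e A) = rigid n r \<alpha> C A \<and> core n r \<alpha> C (insert e A) = core n r \<alpha> C A"
              by (rule mc_same)
            then show ?thesis using AU unfolding U_def by simp
          qed
          then show "ind (U S) A \<le> ind (U S) (insert e A)" unfolding ind_def by auto
        qed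
      qed
      have prodind: "(\<lambda>A. ind (F S) A * ind (U S) A) = ind (F S \<inter> U S)"
        unfolding ind_def by auto
      have "Ex (ind (F S)) = gnp_prob n p (F S \<inter> ?B)" using gp by simp
      then have EF: "Ex (ind (F S)) \<le> \<xi> * Ex (\<lambda>_. 1)"
        using cond Zpos unfolding gnp_cond_def Bprob by (simp add: pos_divide_le_eq)
      have EU: "0 \<le> Ex (ind (U S))" by (rule Exnn) (simp add: ind_nn)
      have "Ex (ind (F S \<inter> U S)) * Ex (\<lambda>_. 1) \<le> (\<xi> * Ex (\<lambda>_. 1)) * Ex (ind (U S))"
        using H prodind EF EU by (metis mult_right_mono order_trans)
      then have "Ex (ind (F S \<inter> U S)) * Ex (\<lambda>_. 1) \<le> (\<xi> * Ex (ind (U S))) * Ex (\<lambda>_. 1)"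
        by (simp add: algebra_simps)
      then show ?thesis using Zpos by simp
    qed
    have pw1: "ind R G \<le> (\<Sum>S\<in>SS. ind (F S \<inter> U S) G)" for G
    proof (cases "G \<in> R")
      case False
      then show ?thesis unfolding ind_def by (simp add: sum_nonneg)
    next
      case True
      then obtain S where S: "is_tuple r S" "inj_on S {1..r}" "S ` {1..r} = core n r \<alpha> C G"
          "compatible r VQ col S" "G \<in> F S" and rig: "rigid n r \<alpha> C G"
        unfolding R_def by blast
      have Sc: "S i \<in> core n r \<alpha> C G" if "i \<in> {1..r}" for i using S(3) that by blast
      then have Scomp: "S i \<in> components n r C G" if "i \<in> {1..r}" for i using that unfolding core_def by blast
      have "pw_disjoint r S" unfolding pw_disjoint_def
      proof (intro ballI impI)
        fix i j assume ij: "i \<in> {1..r}" "j \<in> {1..r}" "i \<noteq> j"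
        then have "S i \<noteq> S j" using S(2) unfolding inj_on_def by blast
        then show "S i \<inter> S j = {}" using comp_eq[OF Scomp[OF ij(1)] Scomp[OF ij(2)]] by blast
      qed
      moreover have "\<forall>i\<in>{1..r}. S i \<subseteq> {1..n}" using comp_sub Scomp by blast
      moreover have "\<forall>i\<in>{1..r}. real (card (S i)) \<ge> (1 - 4 * real r * \<alpha>) * real n / real r"
        using Sc unfolding core_def by (auto intro: less_imp_le)
      ultimately have "S \<in> SS" unfolding SS_def using S by simp
      moreover have "G \<in> F S \<inter> U S" unfolding U_def using S rig by simp
      ultimately have "ind (F S \<inter> U S) G \<le> (\<Sum>S\<in>SS. ind (F S \<inter> U S) G)"
        by (intro member_le_sum finSS) (simp_all add: ind_nn)
      moreover have "ind (F S \<inter> U S) G = 1" using \<open>G \<in> F S \<inter> U S\<close> unfolding ind_def by simp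
      ultimately show ?thesis using True unfolding ind_def by simp
    qed
    have pw2: "(\<Sum>S\<in>SS. ind (U S) G) \<le> fact r" for G
    proof -
      have "(\<Sum>S\<in>SS. ind (U S) G) = (\<Sum>S\<in>{S \<in> SS. G \<in> U S}. 1)"
        unfolding ind_def using sum.inter_filter[OF finSS, of "\<lambda>_. 1::real" "\<lambda>S. G \<in> U S"] by simp
      also have "\<dots> = real (card {S \<in> SS. G \<in> U S})" by simp
      also have "card {S \<in> SS. G \<in> U S} \<le> fact r"
        by (rule count_labellings[where T = "core n r \<alpha> C G"]) (auto simp: SS_def U_def)
      then have "real (card {S \<in> SS. G \<in> U S}) \<le> fact r" by (metis of_nat_fact of_nat_le_iff)
      finally show ?thesis .
    qed
    have "Ex (ind R) \<le> Ex (\<lambda>G. \<Sum>S\<in>SS. ind (F S \<inter> U S) G)" by (rule Exmono) (rule pw1)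
    also have "\<dots> = (\<Sum>S\<in>SS. Ex (ind (F S \<inter> U S)))" unfolding Ex_def by (rule hsum_sum)
    also have "\<dots> \<le> (\<Sum>S\<in>SS. \<xi> * Ex (ind (U S)))" by (rule sum_mono) (rule key)
    also have "\<dots> = \<xi> * Ex (\<lambda>G. \<Sum>S\<in>SS. ind (U S) G)"
      unfolding Ex_def hsum_sum sum_distrib_left ..
    also have "\<dots> \<le> \<xi> * Ex (\<lambda>_. fact r)"
      by (intro mult_left_mono Exmono pw2 xi0)
    also have "\<dots> = \<xi> * fact r * Ex (\<lambda>_. 1)"
      using hsum_cmult[of a b ?E "fact r" "\<lambda>_. 1"] unfolding Ex_def by simp
    finally have "Ex (ind R) \<le> fact r * \<xi> * Ex (\<lambda>_. 1)" by (simp add: algebra_simps)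
    then show ?thesis unfolding R_def[symmetric] goal_eq using Zpos by (simp add: pos_divide_le_eq)
  qed
qed

end
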